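(* Let $\mathbf S=\langle S,\wedge,1\rangle$ be a meet semilattice with top element $1$, and let $\operatorname{Sub}\mathbf S$ denote the lattice of subsemilattices of $\mathbf S$ containing $1$. (a) If $\varepsilon$ is a distributive quasi-order on $\mathbf S$, then $\operatorname{Sub}(\mathbf S,\varepsilon)$, the lattice of all $\varepsilon$-closed subsemilattices containing $1$, is a complete sublattice of $\operatorname{Sub}\mathbf S$. (b) Conversely, let $\mathbf T$ be a complete sublattice of $\operatorname{Sub}\mathbf S$, and define $c\,\rho\,d$ iff for all $X\in\mathbf T$, $c\in X$ implies $d\in X$. Then $\rho$ is a distributive quasi-order, $\mathbf T$ consists precisely of the $\rho$-closed members of $\operatorname{Sub}\mathbf S$, and $\rho$ satisfies (3) if $c\,\rho\,d_1$ and $c\,\rho\,d_2$ then $c\,\rho\,d_1\wedge d_2$; and (4) $c\,\rho\,1$ for all $c\in S$. (c) The correspondence between complete sublattices of $\operatorname{Sub}\mathbf S$ and distributive quasi-orders satisfying (3) and (4) is a dual isomorphism.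
   Context: A quasi-order $\varepsilon$ on $\mathbf S$ is distributive if (1) whenever $c_1\wedge c_2\,\varepsilon\,d$ there exist $d_1,d_2$ with $c_i\,\varepsilon\,d_i$ ($i=1,2$) and $d=d_1\wedge d_2$, and (2) $1\,\varepsilon\,d$ implies $d=1$. A subset $X$ is $\varepsilon$-closed if $c\in X$ and $c\,\varepsilon\,d$ imply $d\in X$. A complete sublattice is a subset closed under arbitrary meets and joins computed in $\operatorname{Sub}\mathbf S$. Quasi-orders are ordered by inclusion. *)

theory Defs
  imports Main
begin

text \<open>The meet semilattice with top S is the whole type 'a (class bounded_semilattice_inf_top);
  meet is inf, the top element 1 is top.\<close>

definition is_sub :: "'a::bounded_semilattice_inf_top set \<Rightarrow> bool" where
  "is_sub X \<longleftrightarrow> top \<in> X \<and> (\<forall>x\<in>X. \<forall>y\<in>X. inf x y \<in> X)"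

definition Sub :: "'a::bounded_semilattice_inf_top set set" where
  "Sub = {X. is_sub X}"

text \<open>Meet in Sub S of a family F is the intersection (UNIV for the empty family);
  join is the subsemilattice (containing top) generated by the union.\<close>
definition sub_meet :: "'a::bounded_semilattice_inf_top set set \<Rightarrow> 'a set" where
  "sub_meet F = \<Inter>F"

definition sub_join :: "'a::bounded_semilattice_inf_top set set \<Rightarrow> 'a set" where
  "sub_join F = \<Inter>{Y. is_sub Y \<and> \<Union>F \<subseteq> Y}"

definition complete_sublattice :: "'a::bounded_semilattice_inf_top set set \<Rightarrow> bool" where
  "complete_sublattice T \<longleftrightarrow> T \<subseteq> Sub \<and>
     (\<forall>F. F \<subseteq> T \<longrightarrow> sub_meet F \<in> T \<and> sub_join F \<in> T)"

definition quasi_order :: "'a rel \<Rightarrow> bool" where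
  "quasi_order e \<longleftrightarrow> refl e \<and> trans e"

definition distributive_qo :: "'a::bounded_semilattice_inf_top rel \<Rightarrow> bool" where
  "distributive_qo e \<longleftrightarrow>
     (\<forall>c1 c2 d. (inf c1 c2, d) \<in> e \<longrightarrow>
        (\<exists>d1 d2. (c1, d1) \<in> e \<and> (c2, d2) \<in> e \<and> d = inf d1 d2)) \<and>
     (\<forall>d. (top, d) \<in> e \<longrightarrow> d = top)"

definition closed_under :: "'a rel \<Rightarrow> 'a set \<Rightarrow> bool" where
  "closed_under e X \<longleftrightarrow> (\<forall>c d. c \<in> X \<and> (c, d) \<in> e \<longrightarrow> d \<in> X)"

definition SubE :: "'a::bounded_semilattice_inf_top rel \<Rightarrow> 'a set set" where
  "SubE e = {X \<in> Sub. closed_under e X}"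

definition rho_of :: "'a set set \<Rightarrow> 'a rel" where
  "rho_of T = {(c, d). \<forall>X\<in>T. c \<in> X \<longrightarrow> d \<in> X}"

definition cond3 :: "'a::bounded_semilattice_inf_top rel \<Rightarrow> bool" where
  "cond3 e \<longleftrightarrow> (\<forall>c d1 d2. (c, d1) \<in> e \<and> (c, d2) \<in> e \<longrightarrow> (c, inf d1 d2) \<in> e)"

definition cond4 :: "'a::bounded_semilattice_inf_top rel \<Rightarrow> bool" where
  "cond4 e \<longleftrightarrow> (\<forall>c. (c, top) \<in> e)"

end

theory Submission
  imports Defs
begin

inductive_set gen :: "'a::bounded_semilattice_inf_top set set \<Rightarrow> 'a set" for F where
  gtop: "top \<in> gen F"
| gbase: "X \<in> F \<Longrightarrow> x \<in> X \<Longrightarrow> x \<in> gen F"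
| ginf: "a \<in> gen F \<Longrightarrow> b \<in> gen F \<Longrightarrow> inf a b \<in> gen F"

lemma gen_sub: "is_sub (gen F)"
  unfolding is_sub_def by (auto intro: gen.intros)

lemma gen_least: "is_sub Y \<Longrightarrow> \<Union>F \<subseteq> Y \<Longrightarrow> gen F \<subseteq> Y"
proof
  fix x assume Y: "is_sub Y" "\<Union>F \<subseteq> Y" and x: "x \<in> gen F"
  from x show "x \<in> Y" using Y by (induction rule: gen.induct) (auto simp: is_sub_def)
qed

lemma sub_join_gen: "sub_join F = gen F"
proof
  show "sub_join F \<subseteq> gen F" unfolding sub_join_def using gen_sub[of F]
    by (auto intro: gen.gbase)
  show "gen F \<subseteq> sub_join F" unfolding sub_join_def using gen_least by blast
qed

lemma partA:
  assumes d: "distributive_qo e"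
  shows "complete_sublattice (SubE e)"
  unfolding complete_sublattice_def
proof (intro conjI allI impI)
  show "SubE e \<subseteq> Sub" by (auto simp: SubE_def)
  fix F assume F: "F \<subseteq> SubE e"
  show "sub_meet F \<in> SubE e"
    using F by (auto simp: sub_meet_def SubE_def Sub_def is_sub_def closed_under_def; blast)
  have "closed_under e (gen F)"
    unfolding closed_under_def
  proof (intro allI impI, elim conjE)
    fix c d assume "c \<in> gen F" "(c, d) \<in> e"
    then show "d \<in> gen F"
    proof (induction arbitrary: d rule: gen.induct)
      case gtop then show ?case using d by (auto simp: distributive_qo_def intro: gen.gtop)
    next
      case (gbase X x)
      then have "X \<in> SubE e" using F by auto
      then have "d \<in> X" using gbase by (auto simp: SubE_def closed_under_def)
      then show ?case using gbase by (auto intro: gen.gbase)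
    next
      case (ginf a b)
      then obtain d1 d2 where "(a, d1) \<in> e" "(b, d2) \<in> e" "d = inf d1 d2"
        using d unfolding distributive_qo_def by blast
      then show ?case using ginf by (auto intro: gen.ginf)
    qed
  qed
  then show "sub_join F \<in> SubE e"
    using gen_sub[of F] by (auto simp: sub_join_gen SubE_def Sub_def)
qed

definition gcl :: "'a set set \<Rightarrow> 'a \<Rightarrow> 'a set" where
  "gcl T c = \<Inter>{X\<in>T. c \<in> X}"

lemma partB:
  fixes T :: "'a::bounded_semilattice_inf_top set set"
  assumes T: "complete_sublattice T"
  shows "quasi_order (rho_of T) \<and> distributive_qo (rho_of T) \<and>
         T = SubE (rho_of T) \<and> cond3 (rho_of T) \<and> cond4 (rho_of T)"
proof -
  have TS: "\<And>X. X \<in> T \<Longrightarrow> is_sub X" using T by (auto simp: complete_sublattice_def Sub_def)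
  have meetT: "\<And>F. F \<subseteq> T \<Longrightarrow> \<Inter>F \<in> T" using T by (auto simp: complete_sublattice_def sub_meet_def)
  have joinT: "\<And>F. F \<subseteq> T \<Longrightarrow> gen F \<in> T" using T by (auto simp: complete_sublattice_def sub_join_gen)
  have gclT: "\<And>c. gcl T c \<in> T" unfolding gcl_def by (rule meetT) auto
  have rho_gcl: "\<And>c d. (c, d) \<in> rho_of T \<longleftrightarrow> d \<in> gcl T c"
    by (auto simp: rho_of_def gcl_def)
  have cin: "\<And>c. c \<in> gcl T c" by (auto simp: gcl_def)
  have qo: "quasi_order (rho_of T)"
    by (auto simp: quasi_order_def rho_of_def refl_on_def trans_def)
  have c3: "cond3 (rho_of T)"
    using TS by (auto simp: cond3_def rho_of_def is_sub_def)
  have c4: "cond4 (rho_of T)"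
    using TS by (auto simp: cond4_def rho_of_def is_sub_def)
  have topT: "gen {} \<in> T" using joinT by blast
  have gen0: "gen ({}::'a set set) \<subseteq> {top}"
    by (rule gen_least) (auto simp: is_sub_def)
  have dq2: "\<forall>d. (top, d) \<in> rho_of T \<longrightarrow> d = top"
  proof (intro allI impI)
    fix d assume "(top, d) \<in> rho_of T"
    then have "d \<in> gen {}" using topT gen.gtop unfolding rho_of_def by blast
    then show "d = top" using gen0 by auto
  qed
  have dq1: "\<forall>c1 c2 d. (inf c1 c2, d) \<in> rho_of T \<longrightarrow>
        (\<exists>d1 d2. (c1, d1) \<in> rho_of T \<and> (c2, d2) \<in> rho_of T \<and> d = inf d1 d2)"
  proof (intro allI impI)
    fix c1 c2 d assume h: "(inf c1 c2, d) \<in> rho_of T"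
    let ?A = "gcl T c1" and ?B = "gcl T c2"
    let ?P = "{inf a b | a b. a \<in> ?A \<and> b \<in> ?B}"
    have A: "is_sub ?A" and B: "is_sub ?B" using TS gclT by auto
    have J: "gen {?A, ?B} \<in> T" using joinT gclT by auto
    have "inf c1 c2 \<in> gen {?A, ?B}" using cin by (blast intro: gen.intros)
    then have dJ: "d \<in> gen {?A, ?B}" using h J unfolding rho_of_def by blast
    have Psub: "is_sub ?P"
      unfolding is_sub_def
    proof (intro conjI ballI)
      show "top \<in> ?P" using A B by (auto simp: is_sub_def)
      fix x y assume "x \<in> ?P" "y \<in> ?P"
      then obtain a b a' b' where "x = inf a b" "y = inf a' b'" "a \<in> ?A" "b \<in> ?B" "a' \<in> ?A" "b' \<in> ?B"
        by blast
      moreover have "inf x y = inf (inf a a') (inf b b')"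
        using calculation by (simp add: inf_aci)
      ultimately show "inf x y \<in> ?P" using A B unfolding is_sub_def by blast
    qed
    have "\<Union>{?A, ?B} \<subseteq> ?P"
    proof
      fix x assume "x \<in> \<Union>{?A, ?B}"
      then have "x \<in> ?A \<or> x \<in> ?B" by blast
      then show "x \<in> ?P"
      proof
        assume "x \<in> ?A" then show ?thesis using B unfolding is_sub_def
          by (metis (mono_tags, lifting) inf_top.right_neutral mem_Collect_eq)
      next
        assume "x \<in> ?B" then show ?thesis using A unfolding is_sub_def
          by (metis (mono_tags, lifting) inf_top.left_neutral mem_Collect_eq)
      qed
    qed
    then have "d \<in> ?P" using dJ gen_least[OF Psub] by blast
    then show "\<exists>d1 d2. (c1, d1) \<in> rho_of T \<and> (c2, d2) \<in> rho_of T \<and> d = inf d1 d2"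
      using rho_gcl by blast
  qed
  have eq: "T = SubE (rho_of T)"
  proof
    show "T \<subseteq> SubE (rho_of T)"
      using TS by (auto simp: SubE_def Sub_def closed_under_def rho_of_def)
    show "SubE (rho_of T) \<subseteq> T"
    proof
      fix X assume "X \<in> SubE (rho_of T)"
      then have X: "is_sub X" "closed_under (rho_of T) X" by (auto simp: SubE_def Sub_def)
      let ?F = "gcl T ` X"
      have "\<Union>?F = X"
      proof
        show "\<Union>?F \<subseteq> X" using X(2) rho_gcl by (auto simp: closed_under_def)
        show "X \<subseteq> \<Union>?F" using cin by blast
      qed
      then have "gen ?F = X"
      proof -
        assume U: "\<Union>?F = X"
        have "gen ?F \<subseteq> X" using gen_least[OF X(1)] U by blast
        moreover have "X \<subseteq> gen ?F"
        proof
          fix x assume "x \<in> X"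
          then show "x \<in> gen ?F" using cin by (blast intro: gen.gbase)
        qed
        ultimately show ?thesis by blast
      qed
      moreover have "gen ?F \<in> T" using joinT gclT by blast
      ultimately show "X \<in> T" by simp
    qed
  qed
  show ?thesis using qo dq1 dq2 eq c3 c4 by (simp add: distributive_qo_def)
qed

lemma rho_SubE:
  assumes "quasi_order e" "cond3 e" "cond4 e"
  shows "rho_of (SubE e) = e"
proof
  show "e \<subseteq> rho_of (SubE e)" by (auto simp: rho_of_def SubE_def closed_under_def)
  show "rho_of (SubE e) \<subseteq> e"
  proof
    fix p assume p: "p \<in> rho_of (SubE e)"
    obtain c d where pcd: "p = (c, d)" by (cases p)
    let ?X = "e `` {c}"
    have "?X \<in> SubE e" using assms
      by (auto simp: SubE_def Sub_def is_sub_def closed_under_def quasi_order_def cond3_def cond4_def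
          trans_def)
    moreover have "c \<in> ?X" using assms by (auto simp: quasi_order_def refl_on_def)
    ultimately have "d \<in> ?X" using p pcd by (auto simp: rho_of_def)
    then show "p \<in> e" using pcd by auto
  qed
qed

theorem theorem8p1:
  shows
   "(\<forall>e :: ('a::bounded_semilattice_inf_top) rel. quasi_order e \<and> distributive_qo e \<longrightarrow> complete_sublattice (SubE e))
    \<and> (\<forall>T :: 'a set set. complete_sublattice T \<longrightarrow>
         quasi_order (rho_of T) \<and> distributive_qo (rho_of T) \<and>
         T = SubE (rho_of T) \<and> cond3 (rho_of T) \<and> cond4 (rho_of T))
    \<and> (bij_betw (rho_of :: 'a set set \<Rightarrow> 'a rel)
          {T. complete_sublattice T}
          {e. quasi_order e \<and> distributive_qo e \<and> cond3 e \<and> cond4 e}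
       \<and> (\<forall>e :: 'a rel. quasi_order e \<and> distributive_qo e \<and> cond3 e \<and> cond4 e \<longrightarrow>
            complete_sublattice (SubE e) \<and> rho_of (SubE e) = e)
       \<and> (\<forall>T1 T2 :: 'a set set. complete_sublattice T1 \<longrightarrow> complete_sublattice T2 \<longrightarrow>
            (T1 \<subseteq> T2 \<longleftrightarrow> rho_of T2 \<subseteq> rho_of T1)))"
proof -
  have bij: "bij_betw (rho_of :: 'a set set \<Rightarrow> 'a rel)
          {T. complete_sublattice T}
          {e. quasi_order e \<and> distributive_qo e \<and> cond3 e \<and> cond4 e}"
    unfolding bij_betw_def
  proof (intro conjI)
    show "inj_on (rho_of :: 'a set set \<Rightarrow> 'a rel) {T. complete_sublattice T}"
      by (rule inj_onI) (metis mem_Collect_eq partB)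
    show "rho_of ` {T. complete_sublattice T} = {e :: 'a rel. quasi_order e \<and> distributive_qo e \<and> cond3 e \<and> cond4 e}"
    proof
      show "rho_of ` {T. complete_sublattice T} \<subseteq> {e :: 'a rel. quasi_order e \<and> distributive_qo e \<and> cond3 e \<and> cond4 e}"
        using partB by blast
      show "{e :: 'a rel. quasi_order e \<and> distributive_qo e \<and> cond3 e \<and> cond4 e} \<subseteq> rho_of ` {T. complete_sublattice T}"
      proof
        fix e :: "'a rel" assume "e \<in> {e. quasi_order e \<and> distributive_qo e \<and> cond3 e \<and> cond4 e}"
        then have "complete_sublattice (SubE e)" "rho_of (SubE e) = e"
          using partA rho_SubE by auto
        then show "e \<in> rho_of ` {T. complete_sublattice T}" by (metis image_eqI mem_Collect_eq)
      qed
    qed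
  qed
  have mono: "\<forall>T1 T2 :: 'a set set. complete_sublattice T1 \<longrightarrow> complete_sublattice T2 \<longrightarrow>
            (T1 \<subseteq> T2 \<longleftrightarrow> rho_of T2 \<subseteq> rho_of T1)"
  proof (intro allI impI iffI)
    fix T1 T2 :: "'a set set"
    assume "T1 \<subseteq> T2" then show "rho_of T2 \<subseteq> rho_of T1" by (auto simp: rho_of_def)
  next
    fix T1 T2 :: "'a set set"
    assume h: "complete_sublattice T1" "complete_sublattice T2" "rho_of T2 \<subseteq> rho_of T1"
    have "SubE (rho_of T1) \<subseteq> SubE (rho_of T2)"
      using h(3) by (auto simp: SubE_def closed_under_def)
    then show "T1 \<subseteq> T2" using partB[OF h(1)] partB[OF h(2)] by simp
  qed
  show ?thesis using partA partB bij mono rho_SubE by blast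
qed

end
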